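(* Let $A$ be a nice $\mathcal{E}(2)$-algebra over $\mathbb{F}_2$ (see context). If $a\in A^d$ and $b\in A^d$ are two elements of the same degree $d$, then $$a\cup_d b=b\cup_d a.$$
   Context: All vector spaces are over $\mathbb{F}_2$. Let $\mathcal{E}(2)$ be the cochain complex (negatively graded) with $\mathcal{E}(2)_i=\mathbb{F}_2\langle e_i,\tau_i\rangle$ for $i\ge 0$, differential $d e_i=d\tau_i=e_{i-1}+\tau_{i-1}$ ($d e_0=d\tau_0=0$), with $\Sigma_2$ acting by $\tau.e_k=\tau_k$, $\tau.\tau_k=e_k$. An $\mathcal{E}(2)$-algebra structure on a cochain complex $A^*$ is a cochain map $\psi:\mathcal{E}(2)\otimes A^{\otimes 2}\to A$ that is $\Sigma_2$-equivariant (with $\Sigma_2$ acting on $\mathrm{Hom}(A^{\otimes 2},A)$ by $(\tau.f)(v_1\otimes v_2)=f(v_2\otimes v_1)$). Writing $x_1\cup_i x_2=\psi(e_i\otimes x_1\otimes x_2)$, this is equivalent to giving linear maps $\cup_i:A^r\otimes A^s\to A^{r+s-i}$ ($i\ge0$) with $\psi(\tau_i\otimes x_1\otimes x_2)=x_2\cup_i x_1$ and the Leibniz rule $\delta(x_1\cup_i x_2)=x_1\cup_{i-1}x_2+x_2\cup_{i-1}x_1+\delta x_1\cup_i x_2+x_1\cup_i\delta x_2$ (with $\cup_{-1}=0$). The $\mathcal{E}(2)$-algebra $A$ is nice if for all homogeneous $x,x'\in A$ of degrees $|x|,|x'|$: (i) $x\cup_{|x|}x=x$; (ii) $x\cup_i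 x'=0$ whenever $i>\min(|x|,|x'|)$. *)

theory Defs
  imports Main
begin

text \<open>A cochain complex of F2-vector spaces A^n (n :: int) is modelled inside an ambient
  abelian group of exponent 2 (= an F2-vector space); A n is the set of homogeneous
  elements of degree n, the components intersect pairwise only in 0.
  dlt is the differential, cup i x y is x cup_i y.\<close>

definition F2_space_char2 :: "'a::ab_group_add itself \<Rightarrow> bool" where
  "F2_space_char2 _ \<longleftrightarrow> (\<forall>x::'a. x + x = 0)"

definition cochain_complex_F2 :: "(int \<Rightarrow> 'a::ab_group_add set) \<Rightarrow> ('a \<Rightarrow> 'a) \<Rightarrow> bool" where
  "cochain_complex_F2 A dlt \<longleftrightarrow>
     F2_space_char2 TYPE('a) \<and>
     (\<forall>n. 0 \<in> A n \<and> (\<forall>x\<in>A n. \<forall>y\<in>A n. x + y \<in> A n)) \<and>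
     (\<forall>m n. m \<noteq> n \<longrightarrow> A m \<inter> A n = {0}) \<and>
     (\<forall>n. \<forall>x\<in>A n. dlt x \<in> A (n + 1)) \<and>
     (\<forall>n. \<forall>x\<in>A n. \<forall>y\<in>A n. dlt (x + y) = dlt x + dlt y) \<and>
     (\<forall>n. \<forall>x\<in>A n. dlt (dlt x) = 0)"

definition E2_algebra :: "(int \<Rightarrow> 'a::ab_group_add set) \<Rightarrow> ('a \<Rightarrow> 'a) \<Rightarrow> (nat \<Rightarrow> 'a \<Rightarrow> 'a \<Rightarrow> 'a) \<Rightarrow> bool" where
  "E2_algebra A dlt cup \<longleftrightarrow>
     cochain_complex_F2 A dlt \<and>
     (\<forall>i r s. \<forall>x\<in>A r. \<forall>y\<in>A s. cup i x y \<in> A (r + s - int i)) \<and>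
     (\<forall>i r s. \<forall>x\<in>A r. \<forall>x'\<in>A r. \<forall>y\<in>A s. cup i (x + x') y = cup i x y + cup i x' y) \<and>
     (\<forall>i r s. \<forall>x\<in>A r. \<forall>y\<in>A s. \<forall>y'\<in>A s. cup i x (y + y') = cup i x y + cup i x y') \<and>
     (\<forall>i r s. \<forall>x\<in>A r. \<forall>y\<in>A s.
        dlt (cup i x y) =
          (if i = 0 then 0 else cup (i - 1) x y + cup (i - 1) y x)
          + cup i (dlt x) y + cup i x (dlt y))"

definition nice_E2_algebra :: "(int \<Rightarrow> 'a::ab_group_add set) \<Rightarrow> ('a \<Rightarrow> 'a) \<Rightarrow> (nat \<Rightarrow> 'a \<Rightarrow> 'a \<Rightarrow> 'a) \<Rightarrow> bool" where
  "nice_E2_algebra A dlt cup \<longleftrightarrow>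
     E2_algebra A dlt cup \<and>
     (\<forall>d::nat. \<forall>x\<in>A (int d). cup d x x = x) \<and>
     (\<forall>i r s. \<forall>x\<in>A r. \<forall>x'\<in>A s. int i > min r s \<longrightarrow> cup i x x' = 0)"

end

theory Submission
  imports Defs
begin

theorem lemma2p4:
  fixes A :: "int \<Rightarrow> 'a::ab_group_add set" and dlt :: "'a \<Rightarrow> 'a"
    and cup :: "nat \<Rightarrow> 'a \<Rightarrow> 'a \<Rightarrow> 'a" and d :: nat and a b :: 'a
  assumes "nice_E2_algebra A dlt cup"
    and "a \<in> A (int d)" and "b \<in> A (int d)"
  shows "cup d a b = cup d b a"
proof -
  have E: "E2_algebra A dlt cup" and id: "\<forall>d::nat. \<forall>x\<in>A (int d). cup d x x = x"
    using assms(1) unfolding nice_E2_algebra_def by auto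
  have C: "cochain_complex_F2 A dlt" using E unfolding E2_algebra_def by auto
  have ch: "\<forall>x::'a. x + x = 0" using C unfolding cochain_complex_F2_def F2_space_char2_def by auto
  have ab: "a + b \<in> A (int d)" using C assms(2,3) unfolding cochain_complex_F2_def by auto
  have l: "\<And>x x' y. x \<in> A (int d) \<Longrightarrow> x' \<in> A (int d) \<Longrightarrow> y \<in> A (int d) \<Longrightarrow> cup d (x + x') y = cup d x y + cup d x' y"
    using E unfolding E2_algebra_def by blast
  have r: "\<And>x y y'. x \<in> A (int d) \<Longrightarrow> y \<in> A (int d) \<Longrightarrow> y' \<in> A (int d) \<Longrightarrow> cup d x (y + y') = cup d x y + cup d x y'"
    using E unfolding E2_algebra_def by blast
  have "a + b = cup d (a+b) (a+b)" using id ab by auto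
  also have "\<dots> = cup d a (a+b) + cup d b (a+b)" using l assms(2,3) ab by auto
  also have "\<dots> = cup d a a + cup d a b + (cup d b a + cup d b b)" using r assms(2,3) by auto
  also have "\<dots> = a + cup d a b + (cup d b a + b)" using id assms(2,3) by auto
  finally have "cup d a b + cup d b a = 0" by (simp add: algebra_simps)
  then have "cup d a b = - cup d b a" by (simp add: add_eq_0_iff)
  also have "- cup d b a = cup d b a" using ch by (metis add_eq_0_iff)
  finally show ?thesis .
qed

end
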